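(* Let $\{G_j\}_{j\in J}$ be a family of metrizable topological groups. Let $\mathbb I=[J]^{\leq\omega}$ be the set of countable subsets of $J$ ordered by inclusion, and for $D\in\mathbb I$ let $G_D=\prod_{j\in D}G_j\times\prod_{j\notin D}\{e_j\}\subseteq\prod_{j\in J}G_j$ with the product topology. Then $\{G_D\}_{D\in\mathbb I}$ (with inclusions as bonding maps) satisfies ACP, and $\operatorname{colim}_{D\in\mathbb I}G_D=\sum_{j\in J}(G_j,e_j)$.
   Context: For pointed spaces $(Y_j,0_j)$, the $\Sigma$-product $\sum_{j\in J}(Y_j,0_j)$ is the set of $y\in\prod_jY_j$ whose support $\{j\mid y_j\neq0_j\}$ is countable, with the topology induced by the product topology. $\operatorname{colim}$ denotes the union $\bigcup_DG_D$ with the colimit space topology $\{U\mid U\cap G_D\text{ open in }G_D\ \forall D\}$. ACP means that this colimit space topology coincides with the finest group topology on the union making all inclusions continuous (equivalently, the union with the colimit space topology is a topological group). *)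

theory Defs
  imports "HOL-Analysis.Analysis" "HOL-Algebra.Product_Groups"
begin

definition topological_group :: "('a, 'b) monoid_scheme \<Rightarrow> 'a topology \<Rightarrow> bool" where
  "topological_group H X \<longleftrightarrow> group H \<and> topspace X = carrier H \<and>
     continuous_map (prod_topology X X) X (\<lambda>(x, y). x \<otimes>\<^bsub>H\<^esub> y) \<and>
     continuous_map X X (\<lambda>x. inv\<^bsub>H\<^esub> x)"

definition sigma_product_set :: "('j \<Rightarrow> 'a topology) \<Rightarrow> 'j set \<Rightarrow> ('j \<Rightarrow> 'a) \<Rightarrow> ('j \<Rightarrow> 'a) set" where
  "sigma_product_set Y J z = {y \<in> topspace (product_topology Y J). countable {j \<in> J. y j \<noteq> z j}}"

definition sigma_product :: "('j \<Rightarrow> 'a topology) \<Rightarrow> 'j set \<Rightarrow> ('j \<Rightarrow> 'a) \<Rightarrow> ('j \<Rightarrow> 'a) topology" where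
  "sigma_product Y J z = subtopology (product_topology Y J) (sigma_product_set Y J z)"

definition colimit_topology :: "'i set \<Rightarrow> ('i \<Rightarrow> 'a topology) \<Rightarrow> 'a topology" where
  "colimit_topology I Y = topology (\<lambda>U. U \<subseteq> (\<Union>i\<in>I. topspace (Y i)) \<and>
       (\<forall>i\<in>I. openin (Y i) (U \<inter> topspace (Y i))))"

text \<open>ACP for a family of subgroups Y_i (i in I) of an ambient group H: the union with
  the colimit space topology is a topological group (the equivalent form of ACP).\<close>
definition ACP :: "'i set \<Rightarrow> ('i \<Rightarrow> 'a topology) \<Rightarrow> ('a, 'b) monoid_scheme \<Rightarrow> bool" where
  "ACP I Y H \<longleftrightarrow>
     topological_group (H\<lparr>carrier := (\<Union>i\<in>I. topspace (Y i))\<rparr>) (colimit_topology I Y)"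

definition face_set :: "('j \<Rightarrow> ('a, 'b) monoid_scheme) \<Rightarrow> 'j set \<Rightarrow> 'j set \<Rightarrow> ('j \<Rightarrow> 'a) set" where
  "face_set G J D = {x \<in> (\<Pi>\<^sub>E j\<in>J. carrier (G j)). \<forall>j\<in>J - D. x j = \<one>\<^bsub>G j\<^esub>}"

end

theory Submission
  imports Defs
begin

lemma openin_topspace_Inter:
  assumes "finite F" "\<And>V. V \<in> F \<Longrightarrow> openin X V"
  shows "openin X (topspace X \<inter> \<Inter>F)"
proof (cases "F = {}")
  case True then show ?thesis by simp
next
  case False
  then have "\<Inter>F \<subseteq> topspace X" using assms openin_subset by blast
  then have "topspace X \<inter> \<Inter>F = \<Inter>F" by blast
  then show ?thesis using assms False by (simp add: openin_Inter)
qed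

lemma finite_in_chain:
  assumes "finite R" "fst ` R \<subseteq> (\<Union>n. Dn n)" "\<And>m n. m \<le> n \<Longrightarrow> Dn m \<subseteq> Dn (n::nat)"
  shows "\<exists>n. fst ` R \<subseteq> Dn n"
  using assms(1,2)
proof (induction R rule: finite_induct)
  case empty then show ?case by simp
next
  case (insert r R)
  then obtain n where n: "fst ` R \<subseteq> Dn n" by auto
  from insert obtain m where m: "fst r \<in> Dn m" by auto
  have "fst ` R \<subseteq> Dn (max m n)" using n assms(3)[of n "max m n"] by auto
  moreover have "fst r \<in> Dn (max m n)" using m assms(3)[of m "max m n"] by auto
  ultimately have "fst ` insert r R \<subseteq> Dn (max m n)" by simp
  then show ?case by blast
qed

lemma sigma_key:
  fixes T :: "'j \<Rightarrow> 'a topology" and e :: "'j \<Rightarrow> 'a" and J :: "'j set" and U :: "('j \<Rightarrow> 'a) set"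
  defines "P \<equiv> product_topology T J"
  defines "S \<equiv> sigma_product_set T J e"
  assumes fc: "\<And>j. j \<in> J \<Longrightarrow> first_countable (T j)"
    and US: "U \<subseteq> S"
    and op: "\<And>D. D \<subseteq> J \<Longrightarrow> countable D \<Longrightarrow>
       \<exists>W. openin P W \<and> U \<inter> {y \<in> topspace P. \<forall>j\<in>J-D. y j = e j}
                       = W \<inter> {y \<in> topspace P. \<forall>j\<in>J-D. y j = e j}"
  shows "openin (subtopology P S) U"
  unfolding openin_subopen[of _ U]
proof
  fix x assume xU: "x \<in> U"
  show "\<exists>V. openin (subtopology P S) V \<and> x \<in> V \<and> V \<subseteq> U"
  proof (rule ccontr)
    assume nc: "\<not> ?thesis"
    have H: "\<exists>y. y \<in> W \<and> y \<in> S \<and> y \<notin> U" if "openin P W" "x \<in> W" for W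
    proof -
      have "openin (subtopology P S) (W \<inter> S)" using that openin_subtopology by blast
      moreover have "x \<in> W \<inter> S" using that xU US by blast
      ultimately show ?thesis using nc by blast
    qed
    define supp where "supp y = {j \<in> J. y j \<noteq> e j}" for y :: "'j \<Rightarrow> 'a"
    have xS: "x \<in> S" using xU US by blast
    then have xP: "x \<in> topspace P" and csx: "countable (supp x)"
      by (auto simp: S_def sigma_product_set_def supp_def P_def)
    have xj: "x j \<in> topspace (T j)" if "j \<in> J" for j
      using xP that by (auto simp: P_def)
    have "\<forall>j\<in>J. \<exists>c::nat \<Rightarrow> 'a set. (\<forall>k. openin (T j) (c k) \<and> x j \<in> c k) \<and>
            (\<forall>V. openin (T j) V \<and> x j \<in> V \<longrightarrow> (\<exists>k. c k \<subseteq> V))"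
    proof
      fix j assume j: "j \<in> J"
      obtain B where B: "countable B" "\<forall>V\<in>B. openin (T j) V"
        "\<forall>U. openin (T j) U \<and> x j \<in> U \<longrightarrow> (\<exists>V\<in>B. x j \<in> V \<and> V \<subseteq> U)"
      proof -
        have "first_countable (T j)" using fc[OF j] .
        then have "\<exists>B. countable B \<and> (\<forall>V\<in>B. openin (T j) V) \<and>
          (\<forall>U. openin (T j) U \<and> x j \<in> U \<longrightarrow> (\<exists>V\<in>B. x j \<in> V \<and> V \<subseteq> U))"
          unfolding first_countable_def using xj[OF j] by (rule bspec)
        then show ?thesis using that by blast
      qed
      define B' where "B' = {V \<in> B. x j \<in> V}"
      have cB': "countable B'" using B(1) by (simp add: B'_def)
      have "\<exists>V\<in>B. x j \<in> V \<and> V \<subseteq> topspace (T j)" using B(3) xj[OF j] by simp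
      then have "B' \<noteq> {}" by (auto simp: B'_def)
      show "\<exists>c::nat \<Rightarrow> 'a set. (\<forall>k. openin (T j) (c k) \<and> x j \<in> c k) \<and>
            (\<forall>V. openin (T j) V \<and> x j \<in> V \<longrightarrow> (\<exists>k. c k \<subseteq> V))"
      proof (rule exI[of _ "from_nat_into B'"], intro conjI allI impI)
        fix k
        have "from_nat_into B' k \<in> B'" using \<open>B' \<noteq> {}\<close> by (rule from_nat_into)
        then show "openin (T j) (from_nat_into B' k)" "x j \<in> from_nat_into B' k"
          using B(2) by (auto simp: B'_def)
      next
        fix V assume "openin (T j) V \<and> x j \<in> V"
        then obtain V' where "V' \<in> B'" "V' \<subseteq> V" using B(3) by (auto simp: B'_def)
        then show "\<exists>k. from_nat_into B' k \<subseteq> V" using from_nat_into_surj[OF cB'] by metis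
      qed
    qed
    from bchoice[OF this] obtain b :: "'j \<Rightarrow> nat \<Rightarrow> 'a set" where b: "\<forall>j\<in>J. (\<forall>k. openin (T j) (b j k) \<and> x j \<in> b j k) \<and>
            (\<forall>V. openin (T j) V \<and> x j \<in> V \<longrightarrow> (\<exists>k. b j k \<subseteq> V))" by blast
    have b1: "\<And>j k. j \<in> J \<Longrightarrow> openin (T j) (b j k) \<and> x j \<in> b j k" using b by blast
    have b2: "\<And>j V. j \<in> J \<Longrightarrow> openin (T j) V \<Longrightarrow> x j \<in> V \<Longrightarrow> \<exists>k. b j k \<subseteq> V"
      using b by blast
    define N where "N R = (\<Pi>\<^sub>E i\<in>J. topspace (T i) \<inter> \<Inter>{b i k |k. (i, k) \<in> R})" for R :: "('j \<times> nat) set"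
    have NP: "N R \<subseteq> topspace P" for R by (auto simp: N_def P_def)
    have Nopen: "openin P (N R) \<and> x \<in> N R" if "finite R" "R \<subseteq> J \<times> UNIV" for R
    proof
      have fin: "finite {b i k |k. (i, k) \<in> R}" for i
      proof -
        have "{b i k |k. (i, k) \<in> R} \<subseteq> (\<lambda>r. b i (snd r)) ` R" by force
        then show ?thesis using that(1) finite_subset by blast
      qed
      have "finite {i \<in> J. topspace (T i) \<inter> \<Inter>{b i k |k. (i, k) \<in> R} \<noteq> topspace (T i)}"
      proof (rule finite_subset)
        show "{i \<in> J. topspace (T i) \<inter> \<Inter>{b i k |k. (i, k) \<in> R} \<noteq> topspace (T i)} \<subseteq> fst ` R"
          by force
      qed (use that in auto)
      moreover have "\<forall>i\<in>J. openin (T i) (topspace (T i) \<inter> \<Inter>{b i k |k. (i, k) \<in> R})"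
        using openin_topspace_Inter fin b1 by blast
      ultimately show "openin P (N R)" unfolding N_def P_def openin_PiE_gen by blast
      show "x \<in> N R" using xP b1 by (auto simp: N_def P_def)
    qed
    define a where "a R = (SOME y. y \<in> N R \<and> y \<in> S \<and> y \<notin> U)" for R
    have aR: "a R \<in> N R \<and> a R \<in> S \<and> a R \<notin> U" if "finite R" "R \<subseteq> J \<times> UNIV" for R
    proof -
      have "\<exists>y. y \<in> N R \<and> y \<in> S \<and> y \<notin> U" using H[of "N R"] Nopen[OF that] by blast
      then show ?thesis unfolding a_def by (rule someI_ex)
    qed
    have csa: "countable (supp (a R))" if "finite R" "R \<subseteq> J \<times> UNIV" for R
      using aR[OF that] by (auto simp: S_def sigma_product_set_def supp_def)
    define Dn where "Dn = rec_nat (supp x) (\<lambda>n D. D \<union> \<Union> ((\<lambda>R. supp (a R)) ` {R. finite R \<and> R \<subseteq> D \<times> UNIV}))"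
    have Dn0: "Dn 0 = supp x" by (simp add: Dn_def)
    have DnS: "Dn (Suc n) = Dn n \<union> \<Union> ((\<lambda>R. supp (a R)) ` {R. finite R \<and> R \<subseteq> Dn n \<times> UNIV})" for n
      by (simp add: Dn_def)
    have DnJ: "Dn n \<subseteq> J \<and> countable (Dn n)" for n
    proof (induction n)
      case 0 then show ?case using csx by (auto simp: Dn0 supp_def)
    next
      case (Suc n)
      have c1: "countable {R. finite R \<and> R \<subseteq> Dn n \<times> (UNIV :: nat set)}"
        using Suc by (intro countable_Collect_finite_subset countable_SIGMA) auto
      have c2: "countable (supp (a R))" if "R \<in> {R. finite R \<and> R \<subseteq> Dn n \<times> UNIV}" for R
        using that Suc by (intro csa) auto
      have "countable (Dn (Suc n))" unfolding DnS
        by (intro countable_Un countable_UN c1 c2) (use Suc in auto)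
      moreover have "Dn (Suc n) \<subseteq> J" unfolding DnS using Suc by (auto simp: supp_def)
      ultimately show ?case by blast
    qed
    have mono: "Dn m \<subseteq> Dn n" if "m \<le> n" for m n
      by (rule lift_Suc_mono_le[of Dn, OF _ that]) (auto simp: DnS)
    define D where "D = (\<Union>n. Dn n)"
    have DJ: "D \<subseteq> J" and cD: "countable D" using DnJ by (auto simp: D_def)
    have closed: "supp (a R) \<subseteq> D" if fR: "finite R" and RD0: "R \<subseteq> D \<times> UNIV" for R
    proof -
      have "fst ` R \<subseteq> (\<Union>n. Dn n)" using RD0 unfolding D_def by force
      then obtain n where "fst ` R \<subseteq> Dn n" using finite_in_chain[OF fR] mono by blast
      then have "R \<subseteq> Dn n \<times> UNIV" by force
      then have "supp (a R) \<subseteq> Dn (Suc n)" using fR unfolding DnS by blast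
      then show ?thesis by (auto simp: D_def)
    qed
    define F where "F = {y \<in> topspace P. \<forall>j\<in>J-D. y j = e j}"
    obtain W where W: "openin P W" "U \<inter> F = W \<inter> F" using op[OF DJ cD] unfolding F_def by blast
    have xF: "x \<in> F" using xP Dn0 by (auto simp: F_def D_def supp_def)
    then have xW: "x \<in> W" using W xU by blast
    then obtain Uo where Uo: "finite {i \<in> J. Uo i \<noteq> topspace (T i)}" "\<forall>i\<in>J. openin (T i) (Uo i)"
      "x \<in> Pi\<^sub>E J Uo" "Pi\<^sub>E J Uo \<subseteq> W"
      using W(1) unfolding P_def openin_product_topology_alt by blast
    define K where "K = {i \<in> J. Uo i \<noteq> topspace (T i)} \<inter> D"
    have "\<forall>i\<in>K. \<exists>k. b i k \<subseteq> Uo i"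
      using b2 Uo(2,3) by (auto simp: K_def PiE_iff)
    then obtain k where k: "\<And>i. i \<in> K \<Longrightarrow> b i (k i) \<subseteq> Uo i" by metis
    define R where "R = (\<lambda>i. (i, k i)) ` K"
    have finR: "finite R" using Uo(1) by (simp add: R_def K_def)
    have RD: "R \<subseteq> D \<times> UNIV" and RJ: "R \<subseteq> J \<times> UNIV" using DJ by (auto simp: R_def K_def)
    define y where "y = a R"
    have y: "y \<in> N R" "y \<in> S" "y \<notin> U" using aR[OF finR RJ] by (auto simp: y_def)
    have sy: "supp y \<subseteq> D" using closed[OF finR RD] by (simp add: y_def)
    have "y \<in> Pi\<^sub>E J Uo"
    proof -
      have yP: "y \<in> (\<Pi>\<^sub>E i\<in>J. topspace (T i))" using NP y(1) by (auto simp: P_def)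
      have "y i \<in> Uo i" if i: "i \<in> J" for i
      proof (cases "Uo i = topspace (T i)")
        case True then show ?thesis using yP i by auto
      next
        case False
        show ?thesis
        proof (cases "i \<in> D")
          case True
          then have "i \<in> K" using False i by (auto simp: K_def)
          then have "(i, k i) \<in> R" by (auto simp: R_def)
          then have "y i \<in> b i (k i)" using y(1) i by (auto simp: N_def)
          then show ?thesis using k \<open>i \<in> K\<close> by blast
        next
          case nD: False
          then have "y i = e i" "x i = e i" using sy xF i by (auto simp: supp_def F_def)
          then show ?thesis using Uo(3) i by (auto simp: PiE_iff)
        qed
      qed
      then show ?thesis using yP by (auto simp: PiE_iff)
    qed
    then have "y \<in> W" using Uo(4) by blast
    moreover have "y \<in> F" using sy NP y(1) by (auto simp: F_def supp_def)
    ultimately have "y \<in> U" using W(2) by blast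
    then show False using y(3) by blast
  qed
qed


theorem corollary2p5:
  fixes G :: "'j \<Rightarrow> ('a, 'b) monoid_scheme"
    and T :: "'j \<Rightarrow> 'a topology"
    and J :: "'j set"
  assumes tg: "\<And>j. j \<in> J \<Longrightarrow> topological_group (G j) (T j)"
    and metr: "\<And>j. j \<in> J \<Longrightarrow> metrizable_space (T j)"
  shows "ACP {D. D \<subseteq> J \<and> countable D}
           (\<lambda>D. subtopology (product_topology T J) (face_set G J D)) (product_group J G)
       \<and> colimit_topology {D. D \<subseteq> J \<and> countable D}
           (\<lambda>D. subtopology (product_topology T J) (face_set G J D))
         = sigma_product T J (\<lambda>j. \<one>\<^bsub>G j\<^esub>)"
proof -
  define P where "P = product_topology T J"
  define e where "e = (\<lambda>j. \<one>\<^bsub>G j\<^esub>)"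
  define S where "S = sigma_product_set T J e"
  define I where "I = {D. D \<subseteq> J \<and> countable D}"
  define Y where "Y = (\<lambda>D. subtopology P (face_set G J D))"
  define H where "H = product_group J G"
  have grp: "\<And>j. j \<in> J \<Longrightarrow> group (G j)" using tg by (simp add: topological_group_def)
  have tsT: "\<And>j. j \<in> J \<Longrightarrow> topspace (T j) = carrier (G j)" using tg by (simp add: topological_group_def)
  have topP: "topspace P = (\<Pi>\<^sub>E j\<in>J. carrier (G j))"
    unfolding P_def topspace_product_topology using tsT by (rule PiE_cong)
  have face_sub: "face_set G J D \<subseteq> topspace P" for D
    using topP by (auto simp: face_set_def)
  have face_eq: "face_set G J D = {y \<in> topspace P. \<forall>j\<in>J-D. y j = e j}" for D
    using topP by (auto simp: face_set_def e_def)
  have tsY: "topspace (Y D) = face_set G J D" for D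
    using face_sub by (auto simp: Y_def)
  have SP: "S \<subseteq> topspace P" by (auto simp: S_def sigma_product_set_def P_def)
  have tsS: "topspace (sigma_product T J e) = S"
    using SP by (auto simp: sigma_product_def S_def P_def)
  have face_S: "face_set G J D \<subseteq> S" if "D \<in> I" for D
  proof
    fix y assume y: "y \<in> face_set G J D"
    have "{j \<in> J. y j \<noteq> e j} \<subseteq> D" using y by (auto simp: face_set_def e_def)
    then have "countable {j \<in> J. y j \<noteq> e j}" using that countable_subset by (auto simp: I_def)
    then show "y \<in> S" using y face_sub by (auto simp: S_def sigma_product_set_def P_def)
  qed
  have UN: "(\<Union>D\<in>I. topspace (Y D)) = S"
  proof
    show "(\<Union>D\<in>I. topspace (Y D)) \<subseteq> S" using face_S tsY by auto
    show "S \<subseteq> (\<Union>D\<in>I. topspace (Y D))"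
    proof
      fix y assume y: "y \<in> S"
      define D where "D = {j \<in> J. y j \<noteq> e j}"
      have "D \<in> I" using y by (auto simp: S_def sigma_product_set_def D_def I_def)
      moreover have "y \<in> face_set G J D"
        using y SP by (auto simp: face_eq D_def)
      ultimately show "y \<in> (\<Union>D\<in>I. topspace (Y D))" using tsY by auto
    qed
  qed
  have fc: "\<And>j. j \<in> J \<Longrightarrow> first_countable (T j)"
    using metr metrizable_imp_first_countable by blast
  have key: "(U \<subseteq> (\<Union>D\<in>I. topspace (Y D)) \<and> (\<forall>D\<in>I. openin (Y D) (U \<inter> topspace (Y D))))
      \<longleftrightarrow> openin (sigma_product T J e) U" for U
  proof
    assume A: "U \<subseteq> (\<Union>D\<in>I. topspace (Y D)) \<and> (\<forall>D\<in>I. openin (Y D) (U \<inter> topspace (Y D)))"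
    have "openin (subtopology (product_topology T J) (sigma_product_set T J e)) U"
    proof (rule sigma_key[OF fc])
      show "U \<subseteq> sigma_product_set T J e" using A UN by (simp add: S_def)
    next
      fix D assume D: "D \<subseteq> J" "countable D"
      then have "openin (Y D) (U \<inter> topspace (Y D))" using A by (auto simp: I_def)
      then obtain W where "openin P W" "U \<inter> face_set G J D = W \<inter> face_set G J D"
        unfolding Y_def tsY[unfolded Y_def] openin_subtopology by blast
      then show "\<exists>W. openin (product_topology T J) W \<and>
          U \<inter> {y \<in> topspace (product_topology T J). \<forall>j\<in>J - D. y j = e j} =
          W \<inter> {y \<in> topspace (product_topology T J). \<forall>j\<in>J - D. y j = e j}"
        using face_eq[of D] unfolding P_def by metis
    qed (auto)
    then show "openin (sigma_product T J e) U" by (simp add: sigma_product_def)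
  next
    assume B: "openin (sigma_product T J e) U"
    then have "U \<subseteq> S" using openin_subset tsS by blast
    moreover
    obtain W where W: "openin P W" "U = W \<inter> S"
      using B unfolding sigma_product_def openin_subtopology P_def S_def by blast
    have "openin (Y D) (U \<inter> topspace (Y D))" if "D \<in> I" for D
    proof -
      have "U \<inter> topspace (Y D) = W \<inter> face_set G J D" using W face_S[OF that] tsY by auto
      then show ?thesis unfolding Y_def openin_subtopology using W(1) by blast
    qed
    ultimately show "U \<subseteq> (\<Union>D\<in>I. topspace (Y D)) \<and> (\<forall>D\<in>I. openin (Y D) (U \<inter> topspace (Y D)))"
      using UN by auto
  qed
  have colim: "colimit_topology I Y = sigma_product T J e"
  proof -
    have "(\<lambda>U. U \<subseteq> (\<Union>D\<in>I. topspace (Y D)) \<and> (\<forall>D\<in>I. openin (Y D) (U \<inter> topspace (Y D))))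
          = openin (sigma_product T J e)"
      using key by (intro ext) blast
    then show ?thesis unfolding colimit_topology_def by (simp add: openin_inverse)
  qed
  have grpH: "group H" unfolding H_def using grp by simp
  have one1: "\<And>j. j \<in> J \<Longrightarrow> \<one>\<^bsub>G j\<^esub> \<otimes>\<^bsub>G j\<^esub> \<one>\<^bsub>G j\<^esub> = \<one>\<^bsub>G j\<^esub>"
    by (meson grp group.is_monoid monoid.l_one monoid.one_closed)
  have mult_S: "(\<lambda>i\<in>J. x i \<otimes>\<^bsub>G i\<^esub> y i) \<in> S" if "x \<in> S" "y \<in> S" for x y
  proof -
    have xy: "x \<in> (\<Pi>\<^sub>E j\<in>J. carrier (G j))" "y \<in> (\<Pi>\<^sub>E j\<in>J. carrier (G j))"
      using that SP topP by auto
    have m1: "(\<lambda>i\<in>J. x i \<otimes>\<^bsub>G i\<^esub> y i) \<in> (\<Pi>\<^sub>E j\<in>J. carrier (G j))"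
      using xy grp by (auto simp: PiE_iff intro: group.is_monoid monoid.m_closed)
    have m2: "{j \<in> J. (\<lambda>i\<in>J. x i \<otimes>\<^bsub>G i\<^esub> y i) j \<noteq> e j} \<subseteq> {j \<in> J. x j \<noteq> e j} \<union> {j \<in> J. y j \<noteq> e j}"
      using xy one1 by (auto simp: e_def PiE_iff)
    have "countable ({j \<in> J. x j \<noteq> e j} \<union> {j \<in> J. y j \<noteq> e j})"
      using that by (auto simp: S_def sigma_product_set_def)
    then have "countable {j \<in> J. (\<lambda>i\<in>J. x i \<otimes>\<^bsub>G i\<^esub> y i) j \<noteq> e j}"
      using m2 countable_subset by blast
    then show ?thesis using m1 topP
      unfolding S_def sigma_product_set_def P_def[symmetric] by blast
  qed
  have inv1: "\<And>j. j \<in> J \<Longrightarrow> inv\<^bsub>G j\<^esub> \<one>\<^bsub>G j\<^esub> = \<one>\<^bsub>G j\<^esub>"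
    by (meson grp group.is_monoid monoid.inv_one)
  have inv_S: "(\<lambda>i\<in>J. inv\<^bsub>G i\<^esub> x i) \<in> S" if "x \<in> S" for x
  proof -
    have xc: "x \<in> (\<Pi>\<^sub>E j\<in>J. carrier (G j))" using that SP topP by auto
    have m1: "(\<lambda>i\<in>J. inv\<^bsub>G i\<^esub> x i) \<in> (\<Pi>\<^sub>E j\<in>J. carrier (G j))"
      using xc grp by (auto simp: PiE_iff intro: group.inv_closed)
    have m2: "{j \<in> J. (\<lambda>i\<in>J. inv\<^bsub>G i\<^esub> x i) j \<noteq> e j} \<subseteq> {j \<in> J. x j \<noteq> e j}"
      using xc inv1 by (auto simp: e_def PiE_iff)
    have "countable {j \<in> J. x j \<noteq> e j}"
      using that by (auto simp: S_def sigma_product_set_def)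
    then have "countable {j \<in> J. (\<lambda>i\<in>J. inv\<^bsub>G i\<^esub> x i) j \<noteq> e j}"
      using m2 countable_subset by blast
    then show ?thesis using m1 topP
      unfolding S_def sigma_product_set_def P_def[symmetric] by blast
  qed
  have subS: "subgroup S H"
  proof (rule group.subgroupI[OF grpH])
    show "S \<subseteq> carrier H" using SP topP by (simp add: H_def)
    have "(\<lambda>i\<in>J. \<one>\<^bsub>G i\<^esub>) \<in> S"
      using topP grp by (auto simp: S_def sigma_product_set_def P_def[symmetric] e_def PiE_iff
          group.is_monoid monoid.one_closed)
    then show "S \<noteq> {}" by blast
    show "inv\<^bsub>H\<^esub> a \<in> S" if "a \<in> S" for a
    proof -
      have "a \<in> (\<Pi>\<^sub>E j\<in>J. carrier (G j))" using that SP topP by auto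
      then have "inv\<^bsub>H\<^esub> a = (\<lambda>i\<in>J. inv\<^bsub>G i\<^esub> a i)"
        unfolding H_def using grp by (rule inv_product_group)
      then show ?thesis using inv_S[OF that] by simp
    qed
    show "a \<otimes>\<^bsub>H\<^esub> b \<in> S" if "a \<in> S" "b \<in> S" for a b
      using mult_S[OF that] by (simp add: H_def)
  qed
  define Sg where "Sg = sigma_product T J e"
  have Sg: "Sg = subtopology P S" by (simp add: Sg_def sigma_product_def P_def S_def)
  have tsSg: "topspace Sg = S" using tsS by (simp add: Sg_def)
  have proj: "continuous_map Sg (T k) (\<lambda>x. x k)" if "k \<in> J" for k
    unfolding Sg P_def
    by (rule continuous_map_from_subtopology[OF continuous_map_product_projection[OF that]])
  have cm: "continuous_map (prod_topology Sg Sg) Sg (\<lambda>p. (\<lambda>i\<in>J. fst p i \<otimes>\<^bsub>G i\<^esub> snd p i))"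
  proof -
    have "continuous_map (prod_topology Sg Sg) P (\<lambda>p. (\<lambda>i\<in>J. fst p i \<otimes>\<^bsub>G i\<^esub> snd p i))"
      unfolding P_def continuous_map_componentwise
    proof (intro conjI ballI)
      show "(\<lambda>p. \<lambda>i\<in>J. fst p i \<otimes>\<^bsub>G i\<^esub> snd p i) ` topspace (prod_topology Sg Sg) \<subseteq> extensional J"
        by auto
    next
      fix k assume k: "k \<in> J"
      have pr: "continuous_map (prod_topology Sg Sg) (prod_topology (T k) (T k)) (\<lambda>p. (fst p k, snd p k))"
      proof (rule continuous_map_pairedI)
        show "continuous_map (prod_topology Sg Sg) (T k) (\<lambda>p. fst p k)"
          using continuous_map_compose[OF continuous_map_fst proj[OF k]] by (simp add: o_def)
        show "continuous_map (prod_topology Sg Sg) (T k) (\<lambda>p. snd p k)"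
          using continuous_map_compose[OF continuous_map_snd proj[OF k]] by (simp add: o_def)
      qed
      have mk: "continuous_map (prod_topology (T k) (T k)) (T k) (\<lambda>(x, y). x \<otimes>\<^bsub>G k\<^esub> y)"
        using tg[OF k] by (simp add: topological_group_def)
      have "continuous_map (prod_topology Sg Sg) (T k) ((\<lambda>(x, y). x \<otimes>\<^bsub>G k\<^esub> y) \<circ> (\<lambda>p. (fst p k, snd p k)))"
        by (rule continuous_map_compose[OF pr mk])
      then show "continuous_map (prod_topology Sg Sg) (T k) (\<lambda>p. (\<lambda>i\<in>J. fst p i \<otimes>\<^bsub>G i\<^esub> snd p i) k)"
        using k by (simp add: o_def case_prod_beta)
    qed
    moreover have "(\<lambda>p. (\<lambda>i\<in>J. fst p i \<otimes>\<^bsub>G i\<^esub> snd p i)) \<in> topspace (prod_topology Sg Sg) \<rightarrow> S"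
      using mult_S tsSg by auto
    ultimately show ?thesis unfolding Sg by (rule continuous_map_into_subtopology)
  qed
  have ci: "continuous_map Sg Sg (\<lambda>x. (\<lambda>i\<in>J. inv\<^bsub>G i\<^esub> x i))"
  proof -
    have "continuous_map Sg P (\<lambda>x. (\<lambda>i\<in>J. inv\<^bsub>G i\<^esub> x i))"
      unfolding P_def continuous_map_componentwise
    proof (intro conjI ballI)
      show "(\<lambda>x. \<lambda>i\<in>J. inv\<^bsub>G i\<^esub> x i) ` topspace Sg \<subseteq> extensional J"
        by auto
    next
      fix k assume k: "k \<in> J"
      have ik: "continuous_map (T k) (T k) (\<lambda>x. inv\<^bsub>G k\<^esub> x)"
        using tg[OF k] by (simp add: topological_group_def)
      have "continuous_map Sg (T k) ((\<lambda>x. inv\<^bsub>G k\<^esub> x) \<circ> (\<lambda>x. x k))"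
        by (rule continuous_map_compose[OF proj[OF k] ik])
      then show "continuous_map Sg (T k) (\<lambda>x. (\<lambda>i\<in>J. inv\<^bsub>G i\<^esub> x i) k)"
        using k by (simp add: o_def)
    qed
    moreover have "(\<lambda>x. (\<lambda>i\<in>J. inv\<^bsub>G i\<^esub> x i)) \<in> topspace Sg \<rightarrow> S"
      using inv_S tsSg by auto
    ultimately show ?thesis unfolding Sg by (rule continuous_map_into_subtopology)
  qed
  have tgS: "topological_group (H\<lparr>carrier := S\<rparr>) Sg"
    unfolding topological_group_def
  proof (intro conjI)
    show "group (H\<lparr>carrier := S\<rparr>)" by (rule subgroup.subgroup_is_group[OF subS grpH])
    show "topspace Sg = carrier (H\<lparr>carrier := S\<rparr>)" using tsSg by simp
    show "continuous_map (prod_topology Sg Sg) Sg (\<lambda>(x, y). x \<otimes>\<^bsub>H\<lparr>carrier := S\<rparr>\<^esub> y)"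
    proof -
      have "(\<lambda>(x, y). x \<otimes>\<^bsub>H\<lparr>carrier := S\<rparr>\<^esub> y) = (\<lambda>p. (\<lambda>i\<in>J. fst p i \<otimes>\<^bsub>G i\<^esub> snd p i))"
        by (auto simp: H_def fun_eq_iff)
      then show ?thesis using cm by simp
    qed
    show "continuous_map Sg Sg (\<lambda>x. inv\<^bsub>H\<lparr>carrier := S\<rparr>\<^esub> x)"
    proof (rule continuous_map_eq[OF ci])
      fix x assume "x \<in> topspace Sg"
      then have xS: "x \<in> S" using tsSg by simp
      then have xc: "x \<in> (\<Pi>\<^sub>E j\<in>J. carrier (G j))" using SP topP by auto
      have "inv\<^bsub>H\<lparr>carrier := S\<rparr>\<^esub> x = inv\<^bsub>H\<^esub> x"
        by (rule group.m_inv_consistent[OF grpH subS xS])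
      also have "\<dots> = (\<lambda>i\<in>J. inv\<^bsub>G i\<^esub> x i)"
        unfolding H_def using xc grp by (rule inv_product_group)
      finally show "(\<lambda>i\<in>J. inv\<^bsub>G i\<^esub> x i) = inv\<^bsub>H\<lparr>carrier := S\<rparr>\<^esub> x" by simp
    qed
  qed
  have "ACP I Y H \<and> colimit_topology I Y = sigma_product T J e"
    unfolding ACP_def UN colim using tgS by (simp add: Sg_def)
  then show ?thesis unfolding I_def Y_def H_def P_def e_def .
qed

end
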